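(* Let $k$ be even, $\pi\in\mathcal B_{k/2}$, $\mathcal G$ a countable set, and let $g=(g_1,\dots,g_k)\in\mathcal G^k$ be a $\pi$-adopted sequence (indices of $g$ read cyclically, $g_{k+1}:=g_1$). If $\{m,m+l\}\in\pi$ with $m<m+l\le k$ and $l>1$, then $$g_m=g_{m+l+1}\quad\text{and}\quad g_{m+1}=g_{m+l}.$$
   Context: A pair-partition of $\{1,\dots,k\}$ is a partition all of whose blocks have exactly two elements; it is crossing if there exist $1\le a<b<c<d\le k$ with $\{a,c\},\{b,d\}\in\pi$, and non-crossing otherwise. For even $k$, $\mathcal B_{k/2}$ denotes the set of non-crossing pair-partitions of $\{1,\dots,k\}$. For $k\ge 4$, $\pi\in\mathcal B_{k/2}$ and a block $\{m,m+1\}\in\pi$ with $1\le m\le k-2$, $\pi\setminus^\bullet\{m,m+1\}\in\mathcal B_{k/2-1}$ denotes the pair-partition of $\{1,\dots,k-2\}$ obtained by deleting the block $\{m,m+1\}$ and relabelling every remaining element $a>m$ as $a-2$. $\pi$-adopted sequences. Let $\mathcal G$ be a countable set and $\pi\in\mathcal B_{k/2}$. A sequence $g=(g_1,\dots,g_k)\in\mathcal G^k$ is $\pi$-adopted, defined recursively in $k$, as follows. For $k=2$ (so $\pi=\{\{1,2\}\}$), $g$ is $\pi$-adopted iff $g_1\neq g_2$. For $k\ge 4$, $g$ is $\pi$-adopted iff for every block of $\pi$ of the form $\{m,m+1\}$ with $1\le m\le k-2$: (a) $g_m=g_{m+2}$ and $g_{m+1}\neq g_s$ for all $s\neq m+1$;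 and (b) the sequence $(g_1,\dots,g_m,g_{m+3},\dots,g_k)\in\mathcal G^{k-2}$, obtained by deleting $g_{m+1}$ and $g_{m+2}$, is $\pi\setminus^\bullet\{m,m+1\}$-adopted. *)

theory Defs
  imports Main "HOL-Library.Countable_Set"
begin

definition pair_partition :: "nat \<Rightarrow> nat set set \<Rightarrow> bool" where
  "pair_partition k \<pi> \<longleftrightarrow>
     (\<forall>B\<in>\<pi>. card B = 2) \<and> \<Union>\<pi> = {1..k} \<and>
     (\<forall>B\<in>\<pi>. \<forall>C\<in>\<pi>. B \<noteq> C \<longrightarrow> B \<inter> C = {})"

definition crossing :: "nat set set \<Rightarrow> bool" where
  "crossing \<pi> \<longleftrightarrow> (\<exists>a b c d. 1 \<le> a \<and> a < b \<and> b < c \<and> c < d \<and> {a, c} \<in> \<pi> \<and> {b, d} \<in> \<pi>)"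

text \<open>NC k \<pi>: \<pi> belongs to B_{k/2} (k even).\<close>
definition NC :: "nat \<Rightarrow> nat set set \<Rightarrow> bool" where
  "NC k \<pi> \<longleftrightarrow> even k \<and> pair_partition k \<pi> \<and> \<not> crossing \<pi>"

definition del_block :: "nat set set \<Rightarrow> nat \<Rightarrow> nat set set" where
  "del_block \<pi> m = (\<lambda>B. (\<lambda>a. if a > m then a - 2 else a) ` B) ` (\<pi> - {{m, m + 1}})"

definition del_seq :: "(nat \<Rightarrow> 'a) \<Rightarrow> nat \<Rightarrow> nat \<Rightarrow> 'a" where
  "del_seq g m = (\<lambda>i. if i \<le> m then g i else g (i + 2))"

function adopted :: "nat \<Rightarrow> nat set set \<Rightarrow> (nat \<Rightarrow> 'a) \<Rightarrow> bool" where
  "adopted k \<pi> g =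
    (if k = 2 then g 1 \<noteq> g 2
     else if 4 \<le> k then
       (\<forall>m. 1 \<le> m \<and> m \<le> k - 2 \<and> {m, m + 1} \<in> \<pi> \<longrightarrow>
          g m = g (m + 2) \<and> (\<forall>s\<in>{1..k}. s \<noteq> m + 1 \<longrightarrow> g (m + 1) \<noteq> g s) \<and>
          adopted (k - 2) (del_block \<pi> m) (del_seq g m))
     else False)"
  by pat_completeness auto
termination by (relation "measure (\<lambda>(k, _, _). k)") auto

definition cyc :: "nat \<Rightarrow> nat \<Rightarrow> nat" where
  "cyc k i = (if i = k + 1 then 1 else i)"

end

theory Submission
  imports Defs
begin

declare adopted.simps[simp del]

lemma pp_mem: "pair_partition k \<pi> \<Longrightarrow> B \<in> \<pi> \<Longrightarrow> x \<in> B \<Longrightarrow> 1 \<le> x \<and> x \<le> k"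
  unfolding pair_partition_def by (metis UnionI atLeastAtMost_iff)

lemma pp_disj: "pair_partition k \<pi> \<Longrightarrow> B \<in> \<pi> \<Longrightarrow> C \<in> \<pi> \<Longrightarrow> x \<in> B \<Longrightarrow> x \<in> C \<Longrightarrow> B = C"
  unfolding pair_partition_def by blast

lemma pp_two: "pair_partition k \<pi> \<Longrightarrow> B \<in> \<pi> \<Longrightarrow> \<exists>x y. x \<noteq> y \<and> B = {x,y}"
  unfolding pair_partition_def by (metis card_2_iff)

lemma partner: assumes "pair_partition k \<pi>" "1 \<le> x" "x \<le> k"
  shows "\<exists>y. y \<noteq> x \<and> {x,y} \<in> \<pi>"
proof -
  have "x \<in> \<Union>\<pi>" using assms unfolding pair_partition_def by auto
  then obtain B where B: "B \<in> \<pi>" "x \<in> B" by auto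
  then obtain u v where "u \<noteq> v" "B = {u,v}" using pp_two assms(1) by blast
  then show ?thesis using B by (metis insert_commute insertE singletonD)
qed

lemma inner_aux:
  assumes "NC k \<pi>"
  shows "\<And>a b. b - a = d \<Longrightarrow> {a,b} \<in> \<pi> \<Longrightarrow> a + 1 < b \<Longrightarrow> \<exists>j. a < j \<and> j + 1 < b \<and> {j,j+1} \<in> \<pi>"
proof (induction d rule: less_induct)
  case (less d a b)
  have pp: "pair_partition k \<pi>" and nc: "\<not> crossing \<pi>" using assms unfolding NC_def by auto
  have "b \<le> k" "1 \<le> a" using pp_mem[OF pp less(3)] by auto
  then obtain c where c: "c \<noteq> a + 1" "{a+1,c} \<in> \<pi>" using partner[OF pp, of "a+1"] less(4) by auto
  have "c \<noteq> a"
  proof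
    assume "c = a"
    then have "{a+1,c} = {a,b}" using pp_disj[OF pp c(2) less(3), of a] by auto
    then show False using less(4) \<open>c = a\<close> by (auto simp: doubleton_eq_iff)
  qed
  moreover have "c \<noteq> b"
  proof
    assume "c = b"
    then have "{a+1,c} = {a,b}" using pp_disj[OF pp c(2) less(3), of b] by auto
    then show False using less(4) \<open>c = b\<close> by (auto simp: doubleton_eq_iff)
  qed
  moreover have "\<not> c < a"
  proof
    assume "c < a"
    have "1 \<le> c" using pp_mem[OF pp c(2), of c] by auto
    then have "crossing \<pi>" unfolding crossing_def using \<open>c < a\<close> less(3,4) c(2)
      by (intro exI[of _ c] exI[of _ a] exI[of _ "a+1"] exI[of _ b]) (auto simp: insert_commute)
    then show False using nc by simp
  qed
  moreover have "\<not> c > b"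
  proof
    assume "c > b"
    then have "crossing \<pi>" unfolding crossing_def using \<open>1 \<le> a\<close> less(3,4) c(2)
      by (intro exI[of _ a] exI[of _ "a+1"] exI[of _ b] exI[of _ c]) auto
    then show False using nc by simp
  qed
  ultimately have cin: "a + 1 < c" "c < b" using c(1) by auto
  show ?case
  proof (cases "c = a + 2")
    case True
    then show ?thesis using c cin by (intro exI[of _ "a+1"]) auto
  next
    case False
    have "c - (a+1) < d" using less(2) cin by auto
    moreover have "a + 1 + 1 < c" using False cin by auto
    ultimately obtain j where "a + 1 < j" "j + 1 < c" "{j,j+1} \<in> \<pi>"
      using less(1)[of "c - (a+1)" c "a+1", OF _ refl c(2)] by auto
    then show ?thesis using cin by (intro exI[of _ j]) auto
  qed
qed

lemma inner: "NC k \<pi> \<Longrightarrow> {a,b} \<in> \<pi> \<Longrightarrow> a + 1 < b \<Longrightarrow> \<exists>j. a < j \<and> j + 1 < b \<and> {j,j+1} \<in> \<pi>"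
  using inner_aux by blast

lemma reduce:
  assumes nc: "NC k \<pi>" and blk: "{j,j+1} \<in> \<pi>" and k4: "k \<ge> 4"
  shows "NC (k-2) (del_block \<pi> j)"
proof -
  define f where "f = (\<lambda>a::nat. if a > j then a - 2 else a)"
  define h where "h = (\<lambda>a::nat. if a \<ge> j then a + 2 else a)"
  have pp: "pair_partition k \<pi>" and ncr: "\<not> crossing \<pi>" and ev: "even k"
    using nc unfolding NC_def by auto
  have j1: "1 \<le> j" "j + 1 \<le> k" using pp_mem[OF pp blk, of j] pp_mem[OF pp blk, of "j+1"] by auto
  have db: "del_block \<pi> j = (\<lambda>B. f ` B) ` (\<pi> - {{j,j+1}})" unfolding del_block_def f_def by simp
  have Bdisj: "x \<noteq> j \<and> x \<noteq> j + 1" if "B \<in> \<pi> - {{j,j+1}}" "x \<in> B" for B x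
    using pp_disj[OF pp _ blk, of B x] that by auto
  have hf: "h (f x) = x" if "B \<in> \<pi> - {{j,j+1}}" "x \<in> B" for B x
    using Bdisj[OF that] unfolding h_def f_def by auto
  have hfB: "h ` f ` B = B" if "B \<in> \<pi> - {{j,j+1}}" for B
    using hf[OF that] by (force simp: image_image)
  have hmono: "h x < h y" if "x < y" for x y using that unfolding h_def by auto
  have fh: "f (h y) = y" for y unfolding h_def f_def by auto
  have mem': "h ` B' \<in> \<pi>" if BB: "B' \<in> del_block \<pi> j" for B'
  proof -
    obtain B where B: "B \<in> \<pi> - {{j,j+1}}" "B' = f ` B" using BB unfolding db by auto
    then show ?thesis using hfB[OF B(1)] by simp
  qed
  have card': "card B' = 2" if BB: "B' \<in> del_block \<pi> j" for B'
  proof -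
    obtain B where B: "B \<in> \<pi> - {{j,j+1}}" "B' = f ` B" using BB unfolding db by auto
    have "inj_on f B" using hf[OF B(1)] by (metis inj_on_inverseI)
    then show ?thesis using B pp unfolding pair_partition_def by (simp add: card_image)
  qed
  have un': "\<Union>(del_block \<pi> j) = {1..k-2}"
  proof
    show "\<Union>(del_block \<pi> j) \<subseteq> {1..k-2}"
    proof
      fix y assume "y \<in> \<Union>(del_block \<pi> j)"
      then obtain B x where B: "B \<in> \<pi> - {{j,j+1}}" "x \<in> B" "y = f x" unfolding db by auto
      have "1 \<le> x" "x \<le> k" using pp_mem[OF pp _ B(2)] B(1) by auto
      then show "y \<in> {1..k-2}" using Bdisj[OF B(1,2)] B(3) j1 unfolding f_def by auto
    qed
  next
    show "{1..k-2} \<subseteq> \<Union>(del_block \<pi> j)"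
    proof
      fix y assume y: "y \<in> {1..k-2}"
      have "h y \<in> {1..k}" using y j1 k4 unfolding h_def by auto
      then have "h y \<in> \<Union>\<pi>" using pp unfolding pair_partition_def by simp
      then obtain B where B: "B \<in> \<pi>" "h y \<in> B" by auto
      have "h y \<noteq> j \<and> h y \<noteq> j + 1" unfolding h_def by auto
      then have "B \<noteq> {j,j+1}" using B by auto
      then have "f ` B \<in> del_block \<pi> j" using B unfolding db by auto
      moreover have "y \<in> f ` B" using B(2) fh by (metis imageI)
      ultimately show "y \<in> \<Union>(del_block \<pi> j)" by auto
    qed
  qed
  have disj': "B' \<inter> C' = {}" if "B' \<in> del_block \<pi> j" "C' \<in> del_block \<pi> j" "B' \<noteq> C'" for B' C'
  proof (rule ccontr)
    assume "B' \<inter> C' \<noteq> {}"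
    then obtain y where "y \<in> B'" "y \<in> C'" by auto
    then have "h y \<in> h ` B'" "h y \<in> h ` C'" by auto
    then have "h ` B' = h ` C'" using pp_disj[OF pp mem'[OF that(1)] mem'[OF that(2)]] by auto
    then have "f ` h ` B' = f ` h ` C'" by simp
    then show False using that(3) fh by (simp add: image_image)
  qed
  have ncr': "\<not> crossing (del_block \<pi> j)"
  proof
    assume "crossing (del_block \<pi> j)"
    then obtain a b c d where abcd: "1 \<le> a" "a < b" "b < c" "c < d" "{a,c} \<in> del_block \<pi> j" "{b,d} \<in> del_block \<pi> j"
      unfolding crossing_def by blast
    have "{h a, h c} \<in> \<pi>" "{h b, h d} \<in> \<pi>" using mem'[OF abcd(5)] mem'[OF abcd(6)] by auto
    moreover have "1 \<le> h a" using abcd(1) unfolding h_def by auto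
    ultimately have "crossing \<pi>" unfolding crossing_def using hmono abcd(2-4) by blast
    then show False using ncr by simp
  qed
  show ?thesis unfolding NC_def pair_partition_def using ev k4 card' un' disj' ncr' by auto
qed

lemma adopted_step:
  assumes "adopted k \<pi> g" "k \<ge> 4" "{j,j+1} \<in> \<pi>" "1 \<le> j" "j \<le> k - 2"
  shows "g j = g (j+2) \<and> adopted (k-2) (del_block \<pi> j) (del_seq g j)"
  using assms(1) assms(2-5) by (subst (asm) adopted.simps) auto

lemma adopted_cases: "adopted k \<pi> g \<Longrightarrow> k = 2 \<or> k \<ge> 4"
  by (subst (asm) adopted.simps) (auto split: if_splits)

lemma del_block_mem: "{a,b} \<in> \<pi> \<Longrightarrow> {a,b} \<noteq> {j,j+1} \<Longrightarrow>
   {if a > j then a - 2 else a, if b > j then b - 2 else b} \<in> del_block \<pi> j"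
  unfolding del_block_def by (rule image_eqI[of _ _ "{a,b}"]) auto

lemma del_seq_alt: "g j = g (j+2) \<Longrightarrow> del_seq g j i = (if i < j then g i else g (i+2))"
  unfolding del_seq_def by auto

lemma last_inner:
  assumes nc: "NC k \<pi>" and blk: "{k-1,k} \<in> \<pi>" and k4: "k \<ge> 4"
  shows "\<exists>j. 1 \<le> j \<and> j + 1 < k - 1 \<and> {j,j+1} \<in> \<pi>"
proof -
  have pp: "pair_partition k \<pi>" using nc unfolding NC_def by auto
  obtain c where c: "c \<noteq> 1" "{1,c} \<in> \<pi>" using partner[OF pp, of 1] k4 by auto
  have "1 \<le> c" "c \<le> k" using pp_mem[OF pp c(2), of c] by auto
  have "c \<noteq> k"
  proof
    assume "c = k" then have "{1,c} = {k-1,k}" using pp_disj[OF pp c(2) blk, of k] by auto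
    then show False using k4 \<open>c = k\<close> by (auto simp: doubleton_eq_iff)
  qed
  moreover have "c \<noteq> k - 1"
  proof
    assume "c = k - 1" then have "{1,c} = {k-1,k}" using pp_disj[OF pp c(2) blk, of "k-1"] by auto
    then show False using k4 \<open>c = k - 1\<close> by (auto simp: doubleton_eq_iff)
  qed
  ultimately have ck: "2 \<le> c" "c \<le> k - 2" using \<open>1 \<le> c\<close> \<open>c \<le> k\<close> c(1) by auto
  show ?thesis
  proof (cases "c = 2")
    case True then show ?thesis using c k4 by (intro exI[of _ 1]) (auto simp: numeral_2_eq_2)
  next
    case False
    then obtain j where "1 < j" "j + 1 < c" "{j,j+1} \<in> \<pi>" using inner[OF nc c(2)] ck by auto
    then show ?thesis using ck by (intro exI[of _ j]) auto
  qed
qed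

lemma Q: "adopted k \<pi> g \<Longrightarrow> NC k \<pi> \<Longrightarrow> {a,b} \<in> \<pi> \<Longrightarrow> a < b \<Longrightarrow> g a = g (cyc k (b+1))"
proof (induction k arbitrary: \<pi> g a b rule: less_induct)
  case (less k)
  have pp: "pair_partition k \<pi>" using less(3) unfolding NC_def by auto
  have ab: "1 \<le> a" "b \<le> k" using pp_mem[OF pp less(4), of a] pp_mem[OF pp less(4), of b] by auto
  consider "k = 2" | "k \<ge> 4" using adopted_cases[OF less(2)] by auto
  then show ?case
  proof cases
    case 1 then have "a = 1" "b = 2" using ab less(5) by auto
    then show ?thesis using 1 by (simp add: cyc_def)
  next
    case 2
    show ?thesis
    proof (cases "b = a + 1 \<and> b < k")
      case True
      then have "g a = g (a+2)" using adopted_step[OF less(2) 2, of a] less(4) ab by auto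
      then show ?thesis using True by (simp add: cyc_def)
    next
      case False
      obtain j where j: "{j,j+1} \<in> \<pi>" "1 \<le> j" 
        and cases: "(a < j \<and> j + 1 < b) \<or> (a = k - 1 \<and> b = k \<and> j + 1 < a)"
      proof (cases "a + 1 < b")
        case True
        then obtain j where "a < j" "j + 1 < b" "{j,j+1} \<in> \<pi>" using inner[OF less(3) less(4)] by auto
        then show ?thesis using that ab by auto
      next
        case F2: False
        then have "a = k - 1" "b = k" using False less(5) ab by auto
        then obtain j where "1 \<le> j" "j + 1 < k - 1" "{j,j+1} \<in> \<pi>"
          using last_inner[OF less(3) _ 2] less(4) by auto
        then show ?thesis using that \<open>a = k - 1\<close> \<open>b = k\<close> by auto
      qed
      have jk: "j \<le> k - 2" using cases ab by auto
      obtain gj: "g j = g (j+2)" and ad': "adopted (k-2) (del_block \<pi> j) (del_seq g j)"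
        using adopted_step[OF less(2) 2 j(1) j(2) jk] by auto
      have nc': "NC (k-2) (del_block \<pi> j)" using reduce[OF less(3) j(1) 2] .
      have ne: "{a,b} \<noteq> {j,j+1}" using cases by (auto simp: doubleton_eq_iff)
      have mem: "{if a > j then a - 2 else a, if b > j then b - 2 else b} \<in> del_block \<pi> j"
        using del_block_mem[OF less(4) ne] .
      have ds: "del_seq g j i = (if i < j then g i else g (i+2))" for i using del_seq_alt[OF gj] .
      from cases show ?thesis
      proof
        assume c1: "a < j \<and> j + 1 < b"
        have "{a, b - 2} \<in> del_block \<pi> j" using mem c1 by auto
        then have "del_seq g j a = del_seq g j (cyc (k-2) (b - 2 + 1))"
          using less(1)[of "k-2", OF _ ad' nc'] 2 c1 by auto
        moreover have "Suc (Suc (Suc (b - 2))) = Suc b" using c1 by auto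
        ultimately show ?thesis using c1 ab 2 unfolding ds cyc_def by (auto split: if_splits)
      next
        assume c2: "a = k - 1 \<and> b = k \<and> j + 1 < a"
        have e1: "(if a > j then a - 2 else a) = k - 3" "(if b > j then b - 2 else b) = k - 2"
          using c2 2 by auto
        have "{k - 3, k - 2} \<in> del_block \<pi> j" using mem unfolding e1 .
        then have "del_seq g j (k-3) = del_seq g j (cyc (k-2) (k - 2 + 1))"
          using less(1)[of "k-2", OF _ ad' nc'] 2 by auto
        moreover have "Suc (Suc (k - 3)) = k - 1" using 2 by auto
        ultimately show ?thesis using c2 ab 2 j gj unfolding ds cyc_def by (auto split: if_splits)
      qed
    qed
  qed
qed

lemma R: "adopted k \<pi> g \<Longrightarrow> NC k \<pi> \<Longrightarrow> {a,b} \<in> \<pi> \<Longrightarrow> a + 1 < b \<Longrightarrow> g (a+1) = g b"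
proof (induction k arbitrary: \<pi> g a b rule: less_induct)
  case (less k)
  have pp: "pair_partition k \<pi>" using less(3) unfolding NC_def by auto
  have ab: "1 \<le> a" "b \<le> k" using pp_mem[OF pp less(4), of a] pp_mem[OF pp less(4), of b] by auto
  consider "k = 2" | "k \<ge> 4" using adopted_cases[OF less(2)] by auto
  then show ?case
  proof cases
    case 1 then show ?thesis using ab less(5) by auto
  next
    case 2
    obtain j where j: "a < j" "j + 1 < b" "{j,j+1} \<in> \<pi>" using inner[OF less(3) less(4) less(5)] by auto
    have jk: "j \<le> k - 2" "1 \<le> j" using j ab by auto
    obtain gj: "g j = g (j+2)" and ad': "adopted (k-2) (del_block \<pi> j) (del_seq g j)"
      using adopted_step[OF less(2) 2 j(3) jk(2) jk(1)] by auto
    have nc': "NC (k-2) (del_block \<pi> j)" using reduce[OF less(3) j(3) 2] .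
    have ne: "{a,b} \<noteq> {j,j+1}" using j by (auto simp: doubleton_eq_iff)
    have mem: "{if a > j then a - 2 else a, if b > j then b - 2 else b} \<in> del_block \<pi> j"
      using del_block_mem[OF less(4) ne] .
    have ds: "del_seq g j i = (if i < j then g i else g (i+2))" for i using del_seq_alt[OF gj] .
    show ?thesis
    proof (cases "b = a + 3")
      case True
      then have "j = a + 1" using j by auto
      then show ?thesis using gj True by (simp add: numeral_eq_Suc)
    next
      case False
      have "{a, b - 2} \<in> del_block \<pi> j" using mem j by auto
      then have "del_seq g j (a+1) = del_seq g j (b - 2)"
        using less(1)[of "k-2", OF _ ad' nc'] 2 j False by auto
      moreover have "Suc (Suc (b - 2)) = b" using j by auto
      ultimately show ?thesis using j gj unfolding ds by (cases "j = Suc a") (auto split: if_splits)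
    qed
  qed
qed

theorem mainTheorem2:
  fixes k m l :: nat and \<pi> :: "nat set set" and G :: "'a set" and g :: "nat \<Rightarrow> 'a"
  assumes "even k"
    and "NC k \<pi>"
    and "countable G"
    and "\<forall>i\<in>{1..k}. g i \<in> G"
    and "adopted k \<pi> g"
    and "{m, m + l} \<in> \<pi>"
    and "m + l \<le> k"
    and "l > 1"
  shows "g m = g (cyc k (m + l + 1)) \<and> g (m + 1) = g (m + l)"
  using Q[OF assms(5,2,6)] R[OF assms(5,2,6)] assms(8) by auto

end
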